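(* Let $G=(V,E)$ be a finite simple undirected graph with $n=|V|$ and let $0<p<1$. Let $S_0=V$ and, for $i=1,\dots,n$, let $S_i=S_{i-1}\setminus\{\ell_i\}$ where $\ell_i\in S_{i-1}$ is any vertex with $d_{\ell_i}(S_{i-1})=\min_{u\in S_{i-1}}d_u(S_{i-1})$ (the standard peeling algorithm, ties broken arbitrarily). Let $S'$ be a set among $S_0,S_1,\dots,S_n$ maximizing $f_p$. Then $2\,f_p(S')\ge \max_{T\subseteq V}f_p(T)$, and equivalently $2^{1/p}M_p(S')\ge\max_{T\subseteq V}M_p(T)$.
   Context: For $v\in V$, $N(v)=\{u\in V:(u,v)\in E\}$ (so $v\notin N(v)$). For $S\subseteq V$ and $v\in V$, $d_v(S)=|N(v)\cap S|$. For $p>0$ and nonempty $S\subseteq V$, $f_p(S)=\frac{1}{|S|}\sum_{v\in S}d_v(S)^p$ (with the convention $0^p=0$), $f_p(\emptyset)=0$, and the $p$-density is $M_p(S)=f_p(S)^{1/p}$. *)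

theory Defs
  imports Complex_Main
begin

definition simple_graph :: "'a set \<Rightarrow> ('a \<Rightarrow> 'a \<Rightarrow> bool) \<Rightarrow> bool" where
  "simple_graph V E \<longleftrightarrow> finite V \<and> (\<forall>u v. E u v \<longrightarrow> E v u) \<and> (\<forall>v. \<not> E v v)
     \<and> (\<forall>u v. E u v \<longrightarrow> u \<in> V \<and> v \<in> V)"

definition nbhd :: "'a set \<Rightarrow> ('a \<Rightarrow> 'a \<Rightarrow> bool) \<Rightarrow> 'a \<Rightarrow> 'a set" where
  "nbhd V E v = {u \<in> V. E u v}"

definition deg_in :: "'a set \<Rightarrow> ('a \<Rightarrow> 'a \<Rightarrow> bool) \<Rightarrow> 'a \<Rightarrow> 'a set \<Rightarrow> nat" where
  "deg_in V E v S = card (nbhd V E v \<inter> S)"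

text \<open>f_p(S); note 0 powr p = 0 in Isabelle, matching the convention 0^p = 0,
  and division by card {} = 0 gives f_p({}) = 0.\<close>
definition fp :: "'a set \<Rightarrow> ('a \<Rightarrow> 'a \<Rightarrow> bool) \<Rightarrow> real \<Rightarrow> 'a set \<Rightarrow> real" where
  "fp V E p S = (if S = {} then 0
      else (\<Sum>v\<in>S. real (deg_in V E v S) powr p) / real (card S))"

definition Mp :: "'a set \<Rightarrow> ('a \<Rightarrow> 'a \<Rightarrow> bool) \<Rightarrow> real \<Rightarrow> 'a set \<Rightarrow> real" where
  "Mp V E p S = fp V E p S powr (1 / p)"

definition peeling :: "'a set \<Rightarrow> ('a \<Rightarrow> 'a \<Rightarrow> bool) \<Rightarrow> (nat \<Rightarrow> 'a set) \<Rightarrow> bool" where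
  "peeling V E S \<longleftrightarrow> S 0 = V \<and>
     (\<forall>i\<in>{1..card V}. \<exists>l\<in>S (i - 1).
        deg_in V E l (S (i - 1)) = Min ((\<lambda>u. deg_in V E u (S (i - 1))) ` S (i - 1))
        \<and> S i = S (i - 1) - {l})"

end

theory Submission
  imports Defs
begin

lemma step_ineq:
  fixes m :: nat and p :: real
  assumes "m \<ge> 1" "0 < p" "p < 1"
  shows "real m powr p - real (m - 1) powr p \<le> real m powr (p - 1)"
proof (cases "m = 1")
  case True then show ?thesis by simp
next
  case False
  then have m2: "m \<ge> 2" using assms by auto
  have a: "real m powr p = real m * real m powr (p - 1)"
    using m2 by (simp add: powr_mult_base)
  have b: "real (m-1) powr p = real (m-1) * real (m-1) powr (p - 1)"
    using m2 by (simp add: powr_mult_base)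
  have c: "real m powr (p - 1) \<le> real (m-1) powr (p - 1)"
    using m2 assms by (intro powr_mono2') auto
  have "real (m-1) * real m powr (p - 1) \<le> real (m-1) * real (m-1) powr (p - 1)"
    using c by (intro mult_left_mono) auto
  moreover have "real (m-1) = real m - 1" using m2 by simp
  ultimately show ?thesis using a b by (simp add: algebra_simps)
qed

lemma peel_card:
  assumes "peeling V E S" "finite V" "i \<le> card V"
  shows "S i \<subseteq> V \<and> card (S i) = card V - i"
  using assms(3)
proof (induction i)
  case 0 then show ?case using assms(1) by (simp add: peeling_def)
next
  case (Suc i)
  then have IH: "S i \<subseteq> V" "card (S i) = card V - i" by auto
  from assms(1) Suc.prems obtain l where l: "l \<in> S i" "S (Suc i) = S i - {l}"
    unfolding peeling_def by (metis atLeastAtMost_iff diff_Suc_1 le_add1 plus_1_eq_Suc)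
  have "finite (S i)" using IH assms(2) finite_subset by blast
  then show ?case using IH l by auto
qed


lemma removal:
  assumes G: "simple_graph V E" and TV: "T \<subseteq> V" and wT: "w \<in> T" and ne: "T - {w} \<noteq> {}"
    and opt: "fp V E p (T - {w}) \<le> fp V E p T" and p: "0 < p" "p < 1"
    and mindeg: "\<forall>u\<in>T. deg_in V E w T \<le> deg_in V E u T"
  shows "fp V E p T \<le> 2 * real (deg_in V E w T) powr p"
proof -
  have finV: "finite V" and sym: "\<And>u v. E u v \<Longrightarrow> E v u" and irr: "\<And>v. \<not> E v v"
    and inV: "\<And>u v. E u v \<Longrightarrow> u \<in> V \<and> v \<in> V"
    using G unfolding simple_graph_def by blast+
  have finT: "finite T" using finV TV finite_subset by blast
  define d where "d = (\<lambda>u X. real (deg_in V E u X) powr p)"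
  define D where "D = deg_in V E w T"
  define L where "L = d w T + (\<Sum>u\<in>T-{w}. d u T - d u (T-{w}))"
  have Tne: "T \<noteq> {}" using wT by blast
  have t2: "card T \<ge> 2"
  proof -
    obtain x where "x \<in> T - {w}" using ne by blast
    then have "{x, w} \<subseteq> T" using wT by blast
    then have "card {x,w} \<le> card T" using finT card_mono by blast
    then show ?thesis using \<open>x \<in> T - {w}\<close> by auto
  qed
  have ct: "card (T - {w}) = card T - 1" using wT finT by simp
  have sumT: "(\<Sum>u\<in>T. d u T) = d w T + (\<Sum>u\<in>T-{w}. d u T)"
    using finT wT by (simp add: sum.remove)
  have sum': "(\<Sum>u\<in>T-{w}. d u (T-{w})) = (\<Sum>u\<in>T. d u T) - L"
    unfolding L_def sumT by (simp add: sum_subtractf)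
  have fpT: "fp V E p T = (\<Sum>u\<in>T. d u T) / real (card T)"
    using Tne unfolding fp_def d_def by simp
  have fpT': "fp V E p (T-{w}) = ((\<Sum>u\<in>T. d u T) - L) / (real (card T) - 1)"
    using ne t2 ct sum'[symmetric] unfolding fp_def d_def by (simp add: of_nat_diff)
  have tpos: "real (card T) - 1 > 0" "real (card T) > 0" using t2 by auto
  have "((\<Sum>u\<in>T. d u T) - L) * real (card T) \<le> (\<Sum>u\<in>T. d u T) * (real (card T) - 1)"
    using opt fpT fpT' tpos by (simp add: divide_simps)
  then have "(\<Sum>u\<in>T. d u T) \<le> L * real (card T)" by (simp add: algebra_simps)
  then have fpL: "fp V E p T \<le> L" using fpT tpos by (simp add: pos_divide_le_eq)
  have trm: "d u T - d u (T-{w}) \<le> (if w \<in> nbhd V E u then real D powr (p - 1) else 0)"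
    if uT: "u \<in> T - {w}" for u
  proof (cases "w \<in> nbhd V E u")
    case False
    then have "nbhd V E u \<inter> (T - {w}) = nbhd V E u \<inter> T" by blast
    then show ?thesis using False unfolding d_def deg_in_def by simp
  next
    case True
    define m where "m = deg_in V E u T"
    have fin: "finite (nbhd V E u \<inter> T)" using finT by simp
    have wn: "w \<in> nbhd V E u \<inter> T" using True wT by blast
    have m1: "m \<ge> 1" unfolding m_def deg_in_def using fin wn
      by (metis One_nat_def Suc_leI card_gt_0_iff empty_iff)
    have "nbhd V E u \<inter> (T - {w}) = (nbhd V E u \<inter> T) - {w}" by blast
    then have mm: "deg_in V E u (T - {w}) = m - 1"
      unfolding m_def deg_in_def using wn fin by simp
    have Dm: "D \<le> m" using mindeg uT unfolding D_def m_def by blast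
    have "E w u" using True unfolding nbhd_def by blast
    then have "u \<in> nbhd V E w \<inter> T" using sym inV uT unfolding nbhd_def by blast
    then have D1: "D \<ge> 1" unfolding D_def deg_in_def using finT
      by (metis One_nat_def Suc_leI card_gt_0_iff empty_iff finite_Int)
    have "d u T - d u (T-{w}) \<le> real m powr (p - 1)"
      using step_ineq[OF m1 p] mm unfolding d_def m_def by simp
    also have "\<dots> \<le> real D powr (p - 1)"
      using Dm D1 p by (intro powr_mono2') auto
    finally show ?thesis using True by simp
  qed
  have "(\<Sum>u\<in>T-{w}. d u T - d u (T-{w})) \<le> (\<Sum>u\<in>T-{w}. (if w \<in> nbhd V E u then real D powr (p - 1) else 0))"
    by (rule sum_mono) (rule trm)
  also have "\<dots> = (\<Sum>u\<in>{u\<in>T-{w}. w \<in> nbhd V E u}. real D powr (p - 1))"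
    using finT by (subst sum.inter_filter) auto
  also have "\<dots> = real (card {u\<in>T-{w}. w \<in> nbhd V E u}) * real D powr (p - 1)"
    by simp
  also have "{u\<in>T-{w}. w \<in> nbhd V E u} = nbhd V E w \<inter> T"
    using sym inV irr TV wT unfolding nbhd_def by blast
  also have "real (card (nbhd V E w \<inter> T)) * real D powr (p - 1) = real D powr p"
  proof (cases "D = 0")
    case True then show ?thesis unfolding D_def deg_in_def by simp
  next
    case False
    then have "real D * real D powr (p - 1) = real D powr p"
      by (simp add: powr_mult_base)
    then show ?thesis unfolding D_def deg_in_def by simp
  qed
  finally have "(\<Sum>u\<in>T-{w}. d u T - d u (T-{w})) \<le> real D powr p" .
  then have "L \<le> 2 * real D powr p" unfolding L_def d_def D_def by simp
  then show ?thesis using fpL unfolding D_def by simp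
qed


lemma fp_nonneg: "fp V E p S \<ge> 0"
  unfolding fp_def by (auto intro!: sum_nonneg divide_nonneg_nonneg)

lemma fp_lower:
  assumes "S \<noteq> {}" "finite S" "\<forall>u\<in>S. D \<le> deg_in V E u S" "0 < p"
  shows "real D powr p \<le> fp V E p S"
proof -
  have "(\<Sum>u\<in>S. real D powr p) \<le> (\<Sum>u\<in>S. real (deg_in V E u S) powr p)"
    using assms by (intro sum_mono powr_mono2) auto
  then have "real (card S) * real D powr p \<le> (\<Sum>u\<in>S. real (deg_in V E u S) powr p)" by simp
  moreover have "real (card S) > 0" using assms card_gt_0_iff by auto
  ultimately show ?thesis using assms(1) unfolding fp_def by (simp add: pos_le_divide_eq mult.commute)
qed

theorem lemma5:
  fixes V :: "'a set" and E :: "'a \<Rightarrow> 'a \<Rightarrow> bool" and p :: real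
    and S :: "nat \<Rightarrow> 'a set" and k :: nat
  assumes "simple_graph V E"
    and "0 < p" and "p < 1"
    and "peeling V E S"
    and "k \<le> card V"
    and "\<forall>j\<le>card V. fp V E p (S j) \<le> fp V E p (S k)"
  shows "2 * fp V E p (S k) \<ge> Max (fp V E p ` Pow V)
     \<and> 2 powr (1 / p) * Mp V E p (S k) \<ge> Max (Mp V E p ` Pow V)"
proof -
  note G = assms(1) and pp = assms(2,3) and pe = assms(4) and best = assms(6)
  have finV: "finite V" and irr: "\<And>v. \<not> E v v"
    using G unfolding simple_graph_def by blast+
  have finP: "finite (Pow V)" using finV by simp
  have "Max (fp V E p ` Pow V) \<in> fp V E p ` Pow V" using finP by (intro Max_in) auto
  then obtain T0 where T0': "Max (fp V E p ` Pow V) = fp V E p T0" "T0 \<in> Pow V"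
    by (rule imageE)
  then have T0: "T0 \<in> Pow V" "fp V E p T0 = Max (fp V E p ` Pow V)" by simp_all
  have TV: "T0 \<subseteq> V" using T0 by blast
  have finT: "finite T0" using TV finV finite_subset by blast
  have main: "fp V E p T0 \<le> 2 * fp V E p (S k)"
  proof (cases "card T0 \<le> 1")
    case True
    have "fp V E p T0 = 0"
    proof (cases "T0 = {}")
      case True then show ?thesis unfolding fp_def by simp
    next
      case False
      then have "card T0 \<noteq> 0" using finT by simp
      then have "card T0 = 1" using True by simp
      then obtain w where "T0 = {w}" by (rule card_1_singletonE)
      moreover have "nbhd V E w \<inter> {w} = {}" using irr unfolding nbhd_def by blast
      ultimately show ?thesis unfolding fp_def deg_in_def by simp
    qed
    then show ?thesis using fp_nonneg[of V E p "S k"] by simp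
  next
    case False
    then have Tne: "T0 \<noteq> {}" by auto
    define D where "D = Min ((\<lambda>u. deg_in V E u T0) ` T0)"
    have "D \<in> (\<lambda>u. deg_in V E u T0) ` T0"
      unfolding D_def using finT Tne by (intro Min_in) auto
    then obtain w where Dw: "D = deg_in V E w T0" and wT: "w \<in> T0" by (rule imageE)
    have Dle: "D \<le> deg_in V E u T0" if "u \<in> T0" for u
    proof -
      have "deg_in V E u T0 \<in> (\<lambda>u. deg_in V E u T0) ` T0" using that by (rule imageI)
      then show ?thesis unfolding D_def using finT by (intro Min_le) auto
    qed
    have mindeg: "\<forall>u\<in>T0. deg_in V E w T0 \<le> deg_in V E u T0"
      using Dle Dw by auto
    have ne: "T0 - {w} \<noteq> {}"
    proof
      assume "T0 - {w} = {}"
      then have "T0 = {w}" using wT by blast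
      then show False using False by simp
    qed
    have opt: "fp V E p (T0 - {w}) \<le> fp V E p T0"
      using T0 finP by (auto intro!: Max_ge)
    have b1: "fp V E p T0 \<le> 2 * real D powr p"
      using removal[OF G TV wT ne opt pp mindeg] Dw by simp
    have pc: "\<And>i. i \<le> card V \<Longrightarrow> S i \<subseteq> V \<and> card (S i) = card V - i"
      using peel_card[OF pe finV] by blast
    have "S (card V) = {}"
    proof -
      have "S (card V) \<subseteq> V" "card (S (card V)) = 0" using pc by auto
      then show ?thesis using finV finite_subset by fastforce
    qed
    then have ex: "\<not> T0 \<subseteq> S (card V)" using Tne by blast
    define j where "j = (LEAST j. \<not> T0 \<subseteq> S j)"
    have j1: "\<not> T0 \<subseteq> S j" unfolding j_def by (rule LeastI[of _ "card V"]) (rule ex)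
    have jle: "j \<le> card V" unfolding j_def by (rule Least_le) (rule ex)
    have j0: "j \<noteq> 0" using j1 TV pe unfolding peeling_def by auto
    define i where "i = j - 1"
    have ji: "j = Suc i" using j0 unfolding i_def by simp
    have Ti: "T0 \<subseteq> S i" using not_less_Least[of i "\<lambda>j. \<not> T0 \<subseteq> S j"] ji unfolding j_def by auto
    have jin: "j \<in> {1..card V}" using jle j0 by simp
    have "\<forall>i\<in>{1..card V}. \<exists>l\<in>S (i - 1).
        deg_in V E l (S (i - 1)) = Min ((\<lambda>u. deg_in V E u (S (i - 1))) ` S (i - 1))
        \<and> S i = S (i - 1) - {l}" using pe unfolding peeling_def by blast
    then have "\<exists>l\<in>S (j - 1).
        deg_in V E l (S (j - 1)) = Min ((\<lambda>u. deg_in V E u (S (j - 1))) ` S (j - 1))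
        \<and> S j = S (j - 1) - {l}" using jin by (rule bspec)
    then obtain l where l: "l \<in> S (j - 1)"
      "deg_in V E l (S (j - 1)) = Min ((\<lambda>u. deg_in V E u (S (j - 1))) ` S (j - 1))"
      "S j = S (j - 1) - {l}" by blast
    have iV: "S i \<subseteq> V" using pc jle ji by simp
    have finSi: "finite (S i)" using iV finV finite_subset by blast
    have lT: "l \<in> T0" using l(3) Ti j1 unfolding i_def by blast
    have "\<forall>u\<in>S i. D \<le> deg_in V E u (S i)"
    proof
      fix u assume u: "u \<in> S i"
      have "D \<le> deg_in V E l T0" using lT by (rule Dle)
      also have "\<dots> \<le> deg_in V E l (S i)"
        unfolding deg_in_def using Ti finSi by (intro card_mono) auto
      also have "\<dots> \<le> deg_in V E u (S i)" using l(2) u finSi unfolding i_def by simp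
      finally show "D \<le> deg_in V E u (S i)" .
    qed
    then have "real D powr p \<le> fp V E p (S i)"
      using fp_lower[of "S i" D V E p] finSi Ti Tne pp by blast
    also have "\<dots> \<le> fp V E p (S k)" using best jle ji by simp
    finally show ?thesis using b1 by simp
  qed
  have part1: "Max (fp V E p ` Pow V) \<le> 2 * fp V E p (S k)" using main T0 by simp
  have "Max (Mp V E p ` Pow V) \<in> Mp V E p ` Pow V" using finP by (intro Max_in) auto
  then obtain T1 where T1': "Max (Mp V E p ` Pow V) = Mp V E p T1" "T1 \<in> Pow V"
    by (rule imageE)
  then have T1: "T1 \<in> Pow V" "Mp V E p T1 = Max (Mp V E p ` Pow V)" by simp_all
  have "fp V E p T1 \<le> Max (fp V E p ` Pow V)" using T1 finP by auto
  then have f1: "fp V E p T1 \<le> 2 * fp V E p (S k)" using part1 by simp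
  have "Mp V E p T1 \<le> (2 * fp V E p (S k)) powr (1/p)"
    unfolding Mp_def using f1 fp_nonneg[of V E p T1] pp by (intro powr_mono2) auto
  also have "\<dots> = 2 powr (1/p) * Mp V E p (S k)"
    unfolding Mp_def using fp_nonneg[of V E p "S k"] by (simp add: powr_mult)
  finally show ?thesis using part1 T1 by simp
qed

end
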